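(* Let $m\ge 1$ and $n\ge 1$ be integers. For $0\le s\le m$ define $$Q_{m,s}(q)=\frac{\prod_{j=0}^{s}(1-q^{2m-2j+1})}{(1-q)^{s}(1-q^2)^{2s}}\sum_{k=0}^{s}\frac{(-1)^{s-k}}{1-q^{2m-2k+1}}\left[\binom{2m-1}{k}-\binom{2m-1}{k-2}\right]\sum_{i=0}^{s-k}\binom{m-s+i}{i}\left[\binom{m-k-i}{s-k-i}q^{2s-2k-2i}+\binom{m-k-i-1}{s-k-i-1}q^{2s-2k-2i-1}\right].$$ Then each $Q_{m,s}(q)$ is a polynomial in $\mathbb{Z}[q]$, and $$S_{2m,n}(q)=\sum_{k=0}^{m}(-1)^kQ_{m,k}(q^{1/2})\frac{(1-q^{n+\frac12})(1-q^n)^{m-k}(1-q^{n+1})^{m-k}(1-q^{1/2})^kq^{kn}}{(1-q^2)(1-q)^{2m-2k-1}\prod_{i=0}^{k}(1-q^{m-i+\frac12})}.$$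
   Context: $q$ is an indeterminate and $q^{1/2}$ a fixed formal square root of $q$; identities are identities of rational functions in $q^{1/2}$. For integers $m,n\ge1$, $$S_{m,n}(q)=\sum_{k=1}^{n}\frac{1-q^{2k}}{1-q^2}\left(\frac{1-q^k}{1-q}\right)^{m-1}q^{\frac{m+1}{2}(n-k)}.$$ Binomial coefficients $\binom{a}{b}$ with integers $a,b$ are taken to be $0$ when $b<0$ or when $0\le a<b$. *)

theory Defs
  imports Complex_Main "HOL-Computational_Algebra.Polynomial" "HOL-Computational_Algebra.Fraction_Field"
begin

text \<open>Binomial coefficient with integer arguments: 0 when b < 0 or 0 <= a < b
  (automatic from nat choose); for a < 0 the usual generalized binomial
  (-1)^b (b-a-1 choose b), which never occurs in the statement.\<close>
definition ibinom :: "int \<Rightarrow> int \<Rightarrow> int" where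
  "ibinom a b = (if b < 0 then 0
     else if a \<ge> 0 then int (nat a choose nat b)
     else (-1)^(nat b) * int (nat (b - a - 1) choose nat b))"

text \<open>S_{m,n}(q), written as a function of t = q^(1/2).\<close>
definition S :: "nat \<Rightarrow> nat \<Rightarrow> 'a::field \<Rightarrow> 'a" where
  "S m n t = (\<Sum>k=1..n. (1 - t^(4*k)) / (1 - t^4) * ((1 - t^(2*k)) / (1 - t^2))^(m-1)
                 * t^((m+1)*(n-k)))"

definition Q :: "nat \<Rightarrow> nat \<Rightarrow> 'a::field \<Rightarrow> 'a" where
  "Q m s q = (\<Prod>j=0..s. 1 - q^(2*m-2*j+1)) / ((1 - q)^s * (1 - q^2)^(2*s))
     * (\<Sum>k=0..s. (-1)^(s-k) / (1 - q^(2*m-2*k+1))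
          * of_int (ibinom (2*int m - 1) (int k) - ibinom (2*int m - 1) (int k - 2))
          * (\<Sum>i=0..s-k. of_int (ibinom (int m - int s + int i) (int i))
               * (of_int (ibinom (int m - int k - int i) (int s - int k - int i))
                    * q powi (2*int s - 2*int k - 2*int i)
                  + of_int (ibinom (int m - int k - int i - 1) (int s - int k - int i - 1))
                    * q powi (2*int s - 2*int k - 2*int i - 1))))"

definition X :: "int poly fract" where
  "X = Fract [:0, 1:] 1"

end

theory Submission
  imports Defs "HOL-Computational_Algebra.Formal_Power_Series" "HOL-Computational_Algebra.Polynomial_Factorial"
begin

definition AA :: "'a::field \<Rightarrow> nat \<Rightarrow> 'a fps" where
  "AA c p = Abs_fps (\<lambda>i. of_nat ((p+i) choose i) * c^i)"

lemma AA_Suc: "(1 - fps_const c * fps_X) * AA c (Suc p) = AA c p"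
proof (rule fps_ext)
  fix n
  show "fps_nth ((1 - fps_const c * fps_X) * AA c (Suc p)) n = fps_nth (AA c p) n"
  proof (cases n)
    case 0 then show ?thesis by (simp add: AA_def algebra_simps)
  next
    case (Suc k)
    have "fps_nth ((1 - fps_const c * fps_X) * AA c (Suc p)) n = fps_nth (AA c (Suc p)) n - c * fps_nth (AA c (Suc p)) k"
      using Suc by (simp add: algebra_simps mult.assoc fps_X_mult_nth)
    also have "\<dots> = of_nat ((Suc p + Suc k) choose Suc k) * c^Suc k - c * (of_nat ((Suc p + k) choose k) * c^k)"
      using Suc by (simp add: AA_def)
    also have "\<dots> = of_nat ((p + Suc k) choose Suc k) * c^Suc k"
    proof -
      have "(Suc p + Suc k) choose Suc k = ((p + Suc k) choose Suc k) + ((Suc p + k) choose k)"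
        by simp
      then show ?thesis by (simp add: algebra_simps)
    qed
    finally show ?thesis using Suc by (simp add: AA_def)
  qed
qed

lemma AA_0: "(1 - fps_const c * fps_X) * AA c 0 = 1"
proof (rule fps_ext)
  fix n
  show "fps_nth ((1 - fps_const c * fps_X) * AA c 0) n = fps_nth (1::'a fps) n"
    by (cases n) (simp_all add: AA_def algebra_simps mult.assoc fps_X_mult_nth)
qed


definition ee :: "'a::field \<Rightarrow> nat \<Rightarrow> nat \<Rightarrow> 'a" where
  "ee q N r = (\<Sum>i=0..r. of_nat ((N+i choose i) * (N+(r-i) choose (r-i))) * q^(r-i))"

lemma ee_fps: "x^r * ee q p r = fps_nth (AA x p * AA (q*x) p) r"
proof -
  have "fps_nth (AA x p * AA (q*x) p) r = (\<Sum>i=0..r. (of_nat ((p+i) choose i) * x^i) * (of_nat ((p+(r-i)) choose (r-i)) * (q*x)^(r-i)))"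
    by (simp add: fps_mult_nth AA_def)
  also have "\<dots> = (\<Sum>i=0..r. x^r * (of_nat ((p+i choose i) * (p+(r-i) choose (r-i))) * q^(r-i)))"
  proof (rule sum.cong[OF refl])
    fix i assume "i \<in> {0..r}"
    then have "x^r = x^i * x^(r-i)" by (simp add: power_add[symmetric])
    then show "(of_nat ((p+i) choose i) * x^i) * (of_nat ((p+(r-i)) choose (r-i)) * (q*x)^(r-i)) = x^r * (of_nat ((p+i choose i) * (p+(r-i) choose (r-i))) * q^(r-i))"
      by (simp add: power_mult_distrib algebra_simps)
  qed
  finally show ?thesis by (simp add: ee_def sum_distrib_left)
qed

definition EE :: "'a::field \<Rightarrow> 'a \<Rightarrow> nat \<Rightarrow> 'a fps" where
  "EE q x p = AA x p * AA (q*x) p"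

definition VV :: "'a::field \<Rightarrow> 'a \<Rightarrow> 'a fps" where
  "VV q x = (1 - fps_const x * fps_X) * (1 - fps_const (q*x) * fps_X)"

lemma EE_Suc: "EE q x (Suc p) * VV q x = EE q x p"
proof -
  have "EE q x (Suc p) * VV q x = ((1 - fps_const x * fps_X) * AA x (Suc p)) * ((1 - fps_const (q*x) * fps_X) * AA (q*x) (Suc p))"
    by (simp add: EE_def VV_def algebra_simps)
  then show ?thesis by (simp add: AA_Suc EE_def)
qed

lemma EE_0: "EE q x 0 * VV q x = 1"
proof -
  have "EE q x 0 * VV q x = ((1 - fps_const x * fps_X) * AA x 0) * ((1 - fps_const (q*x) * fps_X) * AA (q*x) 0)"
    by (simp add: EE_def VV_def algebra_simps)
  then show ?thesis by (simp add: AA_0)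
qed

lemma EE_0': "VV q x * EE q x 0 = 1" using EE_0 by (simp add: mult.commute)
lemma EE_Suc': "VV q x * EE q x (Suc p) = EE q x p" using EE_Suc by (simp add: mult.commute)

lemma KK_telescope:
  "(VV q x - fps_const u * fps_X) * (\<Sum>p=0..M. (fps_const u * fps_X)^p * EE q x p)
     = 1 - (fps_const u * fps_X)^(Suc M) * EE q x M"
proof (induction M)
  case 0 then show ?case by (simp add: algebra_simps EE_0')
next
  case (Suc M)
  have "(VV q x - fps_const u * fps_X) * (\<Sum>p=0..Suc M. (fps_const u * fps_X)^p * EE q x p)
     = (VV q x - fps_const u * fps_X) * (\<Sum>p=0..M. (fps_const u * fps_X)^p * EE q x p)
       + (fps_const u * fps_X)^(Suc M) * (EE q x (Suc M) * VV q x)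
       - (fps_const u * fps_X)^(Suc (Suc M)) * EE q x (Suc M)"
    by (simp add: algebra_simps)
  also have "\<dots> = 1 - (fps_const u * fps_X)^(Suc (Suc M)) * EE q x (Suc M)"
    using Suc by (simp add: EE_Suc EE_Suc')
  finally show ?case .
qed

lemma lin2_gen: "(1 - A * Y) * (1 - B * Y) = 1 - (A + B) * Y + A * B * (Y * (Y::'b::comm_ring_1))"
  by (simp add: algebra_simps)

lemma fps_lin2: "(1 - fps_const (a::'a::field) * fps_X) * (1 - fps_const b * fps_X) =
   1 - fps_const (a+b) * fps_X + fps_const (a*b) * fps_X^2"
  unfolding fps_const_add[symmetric] fps_const_mult[symmetric] power2_eq_square by (rule lin2_gen)

lemma VV_minus: "u = (1-x)*(1-q*x) \<Longrightarrow>
  VV q x - fps_const u * fps_X = (1 - fps_X) * (1 - fps_const (q*x^2) * fps_X)"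
proof -
  assume u: "u = (1-x)*(1-q*x)"
  have "VV q x - fps_const u * fps_X = 1 - fps_const (x + q*x + u) * fps_X + fps_const (x*(q*x)) * fps_X^2"
    unfolding VV_def fps_lin2 by (simp del: fps_const_add add: fps_const_add[symmetric] algebra_simps)
  also have "\<dots> = 1 - fps_const (1 + q*x^2) * fps_X + fps_const (1*(q*x^2)) * fps_X^2"
    using u by (simp add: algebra_simps power2_eq_square)
  also have "\<dots> = (1 - fps_const 1 * fps_X) * (1 - fps_const (q*x^2) * fps_X)"
    unfolding fps_lin2 by simp
  finally show ?thesis by simp
qed


lemma Phi_closed:
  fixes q x u :: "'a::field"
  assumes u: "u = (1-x)*(1-q*x)"
  shows "(\<Sum>p=0..M. ee q p (M-p) * x^(M-p) * u^p) = (\<Sum>j=0..M. (q*x^2)^j)"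
proof -
  define w where "w = q*x^2"
  define K where "K = (\<Sum>p=0..M. (fps_const u * fps_X)^p * EE q x p)"
  define Y where "Y = (fps_const u * fps_X)^(Suc M) * EE q x M"
  define L where "L = AA 1 0 * AA w 0"
  have T: "((1 - fps_X) * (1 - fps_const w * fps_X)) * K = 1 - Y"
    using KK_telescope[of q x u M] VV_minus[OF u] unfolding K_def Y_def w_def by simp
  have L1: "((1 - fps_X) * (1 - fps_const w * fps_X)) * L = 1"
  proof -
    have "((1 - fps_X) * (1 - fps_const w * fps_X)) * L
        = ((1 - fps_const 1 * fps_X) * AA 1 0) * ((1 - fps_const w * fps_X) * AA w 0)"
      unfolding L_def by (simp add: algebra_simps)
    then show ?thesis by (simp only: AA_0) simp
  qed
  have KL: "K = L - Y * L"
  proof -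
    have "K = K * (((1 - fps_X) * (1 - fps_const w * fps_X)) * L)" using L1 by simp
    also have "\<dots> = (((1 - fps_X) * (1 - fps_const w * fps_X)) * K) * L" by (simp add: algebra_simps)
    also have "\<dots> = (1 - Y) * L" using T by simp
    also have "\<dots> = L - Y * L" by (simp add: algebra_simps)
    finally show ?thesis .
  qed
  have Y0: "fps_nth (Y * L) M = 0"
  proof -
    have "Y * L = fps_X^(Suc M) * (fps_const (u^Suc M) * EE q x M * L)"
      unfolding Y_def by (simp add: power_mult_distrib algebra_simps)
    then show ?thesis by (simp only: fps_X_power_mult_nth) simp
  qed
  have LM: "fps_nth L M = (\<Sum>j=0..M. w^j)"
  proof -
    have "fps_nth L M = (\<Sum>i=0..M. w^(M-i))" unfolding L_def by (simp add: fps_mult_nth AA_def)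
    also have "\<dots> = (\<Sum>j=0..M. w^j)"
      using sum.atLeastAtMost_rev[of "\<lambda>j. w^j" 0 M] by simp
    finally show ?thesis .
  qed
  have KM: "fps_nth K M = (\<Sum>p=0..M. ee q p (M-p) * x^(M-p) * u^p)"
  proof -
    have "fps_nth K M = (\<Sum>p=0..M. fps_nth ((fps_const u * fps_X)^p * EE q x p) M)"
      unfolding K_def by (simp add: fps_sum_nth)
    also have "\<dots> = (\<Sum>p=0..M. ee q p (M-p) * x^(M-p) * u^p)"
    proof (rule sum.cong[OF refl])
      fix p assume p: "p \<in> {0..M}"
      have e: "(fps_const u * fps_X)^p * EE q x p = fps_const (u^p) * (fps_X^p * EE q x p)"
        by (simp add: power_mult_distrib algebra_simps)
      have "fps_nth ((fps_const u * fps_X)^p * EE q x p) M = fps_nth (fps_const (u^p) * (fps_X^p * EE q x p)) M"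
        by (simp only: e)
      also have "\<dots> = u^p * fps_nth (EE q x p) (M-p)"
        using p by (simp add: fps_X_power_mult_nth)
      also have "\<dots> = u^p * (x^(M-p) * ee q p (M-p))"
        by (simp add: ee_fps EE_def)
      finally show "fps_nth ((fps_const u * fps_X)^p * EE q x p) M = ee q p (M-p) * x^(M-p) * u^p"
        by (simp add: algebra_simps)
    qed
    finally show ?thesis .
  qed
  show ?thesis using KM KL Y0 LM unfolding w_def by simp
qed


definition HH :: "nat \<Rightarrow> nat \<Rightarrow> nat \<Rightarrow> 'a::field \<Rightarrow> 'a" where
  "HH m s k q = (\<Sum>i=0..s-k. of_int (ibinom (int m - int s + int i) (int i))
               * (of_int (ibinom (int m - int k - int i) (int s - int k - int i))
                    * q powi (2*int s - 2*int k - 2*int i)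
                  + of_int (ibinom (int m - int k - int i - 1) (int s - int k - int i - 1))
                    * q powi (2*int s - 2*int k - 2*int i - 1)))"

lemma ibinom_nat: "ibinom (int a) (int b) = int (a choose b)"
  by (simp add: ibinom_def)

lemma ibinom_neg: "b < 0 \<Longrightarrow> ibinom a b = 0"
  by (simp add: ibinom_def)

lemma HH_term:
  fixes t :: "'a::field"
  assumes "k \<le> s" "s \<le> m" "i \<le> s - k"
  shows "of_int (ibinom (int m - int s + int i) (int i))
               * (of_int (ibinom (int m - int k - int i) (int s - int k - int i))
                    * t powi (2*int s - 2*int k - 2*int i)
                  + of_int (ibinom (int m - int k - int i - 1) (int s - int k - int i - 1))
                    * t powi (2*int s - 2*int k - 2*int i - 1))
    = of_nat (((m-s)+i choose i) * ((m-s)+((s-k)-i) choose ((s-k)-i))) * (t^2)^((s-k)-i)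
      + (if i < s - k then t * (of_nat (((m-s)+i choose i) * ((m-s)+((s-k)-1-i) choose ((s-k)-1-i))) * (t^2)^((s-k)-1-i)) else 0)"
proof -
  have e1: "int m - int s + int i = int ((m-s)+i)" using assms by simp
  have e2: "int m - int k - int i = int ((m-s)+((s-k)-i))" using assms by simp
  have e3: "int s - int k - int i = int ((s-k)-i)" using assms by simp
  have e4: "2*int s - 2*int k - 2*int i = int (2*((s-k)-i))" using assms by simp
  show ?thesis
  proof (cases "i < s - k")
    case True
    have e5: "int m - int k - int i - 1 = int ((m-s)+((s-k)-1-i))" using assms True by simp
    have e6: "int s - int k - int i - 1 = int ((s-k)-1-i)" using assms True by simp
    have e7: "2*int s - 2*int k - 2*int i - 1 = int (2*((s-k)-1-i) + 1)" using assms True by simp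
    show ?thesis unfolding e5 e6 e7 unfolding e1 e2 e3 e4 ibinom_nat power_int_of_nat
      using True by (simp add: power_mult[symmetric] algebra_simps)
  next
    case False
    have e6: "int s - int k - int i - 1 < 0" using assms False by simp
    show ?thesis unfolding e1 e2 e3 e4 ibinom_nat power_int_of_nat ibinom_neg[OF e6]
      using False by (simp add: power_mult[symmetric] algebra_simps ibinom_def)
  qed
qed

lemma HH_ee:
  fixes t :: "'a::field"
  assumes "k \<le> s" "s \<le> m"
  shows "HH m s k t = ee (t^2) (m-s) (s-k) + (if k < s then t * ee (t^2) (m-s) (s-k-1) else 0)"
proof -
  define N where "N = m - s"
  define r where "r = s - k"
  have "HH m s k t = (\<Sum>i=0..r. of_nat ((N+i choose i) * (N+(r-i) choose (r-i))) * (t^2)^(r-i)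
      + (if i < r then t * (of_nat ((N+i choose i) * (N+(r-1-i) choose (r-1-i))) * (t^2)^(r-1-i)) else 0))"
    unfolding HH_def N_def r_def using assms by (intro sum.cong refl HH_term) auto
  also have "\<dots> = ee (t^2) N r + (\<Sum>i=0..r. (if i < r then t * (of_nat ((N+i choose i) * (N+(r-1-i) choose (r-1-i))) * (t^2)^(r-1-i)) else 0))"
    by (simp add: sum.distrib ee_def)
  also have "(\<Sum>i=0..r. (if i < r then t * (of_nat ((N+i choose i) * (N+(r-1-i) choose (r-1-i))) * (t^2)^(r-1-i)) else 0))
      = (if 0 < r then t * ee (t^2) N (r-1) else 0)"
  proof (cases r)
    case 0 then show ?thesis by simp
  next
    case (Suc r')
    have "(\<Sum>i=0..r. (if i < r then t * (of_nat ((N+i choose i) * (N+(r-1-i) choose (r-1-i))) * (t^2)^(r-1-i)) else 0))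
       = (\<Sum>i=0..r'. t * (of_nat ((N+i choose i) * (N+(r'-i) choose (r'-i))) * (t^2)^(r'-i)))"
      unfolding Suc sum.atLeast0_atMost_Suc
    proof -
      have "\<And>i. i \<in> {0..r'} \<Longrightarrow> (if i < Suc r' then t * (of_nat ((N+i choose i) * (N+(Suc r'-1-i) choose (Suc r'-1-i))) * (t^2)^(Suc r'-1-i)) else 0)
          = t * (of_nat ((N+i choose i) * (N+(r'-i) choose (r'-i))) * (t^2)^(r'-i))" by auto
      then show "(\<Sum>i=0..r'. (if i < Suc r' then t * (of_nat ((N+i choose i) * (N+(Suc r'-1-i) choose (Suc r'-1-i))) * (t^2)^(Suc r'-1-i)) else 0))
         + (if Suc r' < Suc r' then t * (of_nat ((N+Suc r' choose Suc r') * (N+(Suc r'-1-Suc r') choose (Suc r'-1-Suc r'))) * (t^2)^(Suc r'-1-Suc r')) else 0)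
        = (\<Sum>i=0..r'. t * (of_nat ((N+i choose i) * (N+(r'-i) choose (r'-i))) * (t^2)^(r'-i)))"
        by simp
    qed
    then show ?thesis using Suc by (simp add: ee_def sum_distrib_left)
  qed
  finally show ?thesis unfolding N_def r_def using assms by auto
qed


lemma sum_rev_reindex:
  assumes "l \<le> (m::nat)"
  shows "(\<Sum>s=l..m. F s) = (\<Sum>p=0..m-l. F (m-p))"
  by (rule sum.reindex_bij_witness[of _ "\<lambda>p. m-p" "\<lambda>s. m-s"]) (use assms in auto)

lemma geo_one_minus: "(1 - y) * (\<Sum>i=0..n. y^i) = 1 - (y::'a::comm_ring_1)^(Suc n)"
  using sum_gp_basic[of y n] by (simp add: atLeast0AtMost)

lemma geo2:
  "(\<Sum>j=0..M. ((y::'a::comm_ring_1)^2)^j) + (if M = 0 then 0 else y * (\<Sum>j=0..M-1. (y^2)^j)) = (\<Sum>i=0..2*M. y^i)"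
proof (induction M)
  case 0 then show ?case by simp
next
  case (Suc M)
  have "(\<Sum>i=0..2*Suc M. y^i) = (\<Sum>i=0..2*M. y^i) + y^(2*M+1) + y^(2*M+2)"
    by (simp add: sum.atLeast0_atMost_Suc)
  also have "\<dots> = (\<Sum>j=0..M. (y^2)^j) + (if M = 0 then 0 else y * (\<Sum>j=0..M-1. (y^2)^j)) + y^(2*M+1) + y^(2*M+2)"
    using Suc by simp
  also have "\<dots> = (\<Sum>j=0..Suc M. (y^2)^j) + y * (\<Sum>j=0..M. (y^2)^j)"
  proof (cases M)
    case 0 then show ?thesis by (simp add: algebra_simps power2_eq_square)
  next
    case (Suc M')
    then show ?thesis by (simp add: sum.atLeast0_atMost_Suc algebra_simps power_mult[symmetric] power_add)
  qed
  finally show ?case by simp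
qed

lemma T_identity:
  fixes t x :: "'a::field"
  assumes lm: "l \<le> m"
  shows "(\<Sum>s=l..m. HH m s l t * (x^s * (1 - t*x) * ((1-x)*(1-t^2*x))^(m-s)))
       = x^l - t^(2*m-2*l+1) * x^(2*m+1-l)"
proof -
  define M where "M = m - l"
  define u where "u = (1-x)*(1-t^2*x)"
  have "(\<Sum>s=l..m. HH m s l t * (x^s * (1 - t*x) * ((1-x)*(1-t^2*x))^(m-s)))
      = (\<Sum>p=0..M. HH m (m-p) l t * (x^(m-p) * (1 - t*x) * u^(m-(m-p))))"
    unfolding M_def u_def using lm by (rule sum_rev_reindex)
  also have "\<dots> = (\<Sum>p=0..M. (1 - t*x) * x^l * (ee (t^2) p (M-p) * x^(M-p) * u^p)
        + (1 - t*x) * x^l * (t * x) * (if p < M then ee (t^2) p (M-1-p) * x^(M-1-p) * u^p else 0))"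
  proof (rule sum.cong[OF refl])
    fix p assume p: "p \<in> {0..M}"
    have h: "HH m (m-p) l t = ee (t^2) p (M-p) + (if p < M then t * ee (t^2) p (M-p-1) else 0)"
      using HH_ee[of l "m-p" m t] p lm unfolding M_def by (auto simp: diff_diff_right add.commute)
    have xm: "x^(m-p) = x^l * x^(M-p)" using p lm unfolding M_def by (simp add: power_add[symmetric])
    have xm2: "p < M \<Longrightarrow> x^(M-p) = x * x^(M-1-p)" using p by (simp add: power_Suc[symmetric] Suc_diff_Suc)
    have mp: "m - (m-p) = p" using p lm unfolding M_def by simp
    show "HH m (m-p) l t * (x^(m-p) * (1 - t*x) * u^(m-(m-p))) = (1 - t*x) * x^l * (ee (t^2) p (M-p) * x^(M-p) * u^p)
        + (1 - t*x) * x^l * (t * x) * (if p < M then ee (t^2) p (M-1-p) * x^(M-1-p) * u^p else 0)"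
      unfolding h xm mp using xm2 by (cases "p < M") (simp_all add: algebra_simps)
  qed
  also have "\<dots> = (1 - t*x) * x^l * ((\<Sum>p=0..M. ee (t^2) p (M-p) * x^(M-p) * u^p)
        + (t * x) * (\<Sum>p=0..M. (if p < M then ee (t^2) p (M-1-p) * x^(M-1-p) * u^p else 0)))"
    by (simp only: sum.distrib sum_distrib_left[symmetric] distrib_left mult.assoc)
  also have "(\<Sum>p=0..M. (if p < M then ee (t^2) p (M-1-p) * x^(M-1-p) * u^p else 0))
      = (if M = 0 then 0 else (\<Sum>p=0..M-1. ee (t^2) p (M-1-p) * x^(M-1-p) * u^p))"
  proof (cases M)
    case 0 then show ?thesis by simp
  next
    case (Suc M')
    then show ?thesis by (simp add: sum.atLeast0_atMost_Suc)
  qed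
  also have "(\<Sum>p=0..M. ee (t^2) p (M-p) * x^(M-p) * u^p) = (\<Sum>j=0..M. ((t*x)^2)^j)"
    using Phi_closed[of u x "t^2" M] unfolding u_def by (simp add: power_mult_distrib)
  also have "(if M = 0 then 0 else (\<Sum>p=0..M-1. ee (t^2) p (M-1-p) * x^(M-1-p) * u^p))
      = (if M = 0 then 0 else (\<Sum>j=0..M-1. ((t*x)^2)^j))"
    using Phi_closed[of u x "t^2" "M-1"] unfolding u_def by (simp add: power_mult_distrib)
  also have "(1 - t*x) * x^l * ((\<Sum>j=0..M. ((t*x)^2)^j) + (t * x) * (if M = 0 then 0 else (\<Sum>j=0..M-1. ((t*x)^2)^j)))
      = x^l * ((1 - t*x) * ((\<Sum>j=0..M. ((t*x)^2)^j) + (if M = 0 then 0 else (t*x) * (\<Sum>j=0..M-1. ((t*x)^2)^j))))"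
    by simp
  also have "\<dots> = x^l * (1 - (t*x)^(Suc (2*M)))"
    unfolding geo2 geo_one_minus by simp
  also have "\<dots> = x^l - t^(2*m-2*l+1) * x^(2*m+1-l)"
  proof -
    have "Suc (2*M) = 2*m-2*l+1" using lm unfolding M_def by simp
    moreover have "x^l * x^(2*m-2*l+1) = x^(2*m+1-l)"
    proof -
      have "l + (2*m-2*l+1) = 2*m+1-l" using lm by simp
      then show ?thesis by (metis power_add)
    qed
    ultimately show ?thesis by (simp add: power_mult_distrib algebra_simps)
  qed
  finally show ?thesis .
qed


definition dd :: "nat \<Rightarrow> nat \<Rightarrow> int" where
  "dd m k = ibinom (2*int m - 1) (int k) - ibinom (2*int m - 1) (int k - 2)"

lemma binom_full0:
  fixes y :: "'a::comm_ring_1"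
  shows "(\<Sum>j=0..n. of_int ((-1)^j * ibinom (int n) (int j)) * y^j) = (1-y)^n"
proof -
  have "(1-y)^n = (\<Sum>j\<le>n. of_nat (n choose j) * (-y)^j * 1^(n-j))"
    using binomial_ring[of "-y" 1 n] by (simp add: algebra_simps)
  also have "\<dots> = (\<Sum>j=0..n. of_int ((-1)^j * ibinom (int n) (int j)) * y^j)"
    unfolding atLeast0AtMost by (intro sum.cong refl) (simp add: ibinom_nat power_minus[of y])
  finally show ?thesis by simp
qed

lemma binom_full:
  fixes y :: "'a::comm_ring_1"
  shows "(\<Sum>j=0..n+2. of_int ((-1)^j * ibinom (int n) (int j)) * y^j) = (1-y)^n"
  using binom_full0[of n y] by (simp add: ibinom_nat sum.atLeast0_atMost_Suc binomial_eq_0)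

lemma binom_shift2:
  fixes y :: "'a::comm_ring_1"
  shows "(\<Sum>j=0..n+2. of_int ((-1)^j * ibinom (int n) (int j - 2)) * y^j) = y^2 * (1-y)^n"
proof -
  have "(\<Sum>j=0..n+2. of_int ((-1)^j * ibinom (int n) (int j - 2)) * y^j)
      = (\<Sum>j=0..Suc (Suc n). of_int ((-1)^j * ibinom (int n) (int j - 2)) * y^j)" by simp
  also have "\<dots> = (\<Sum>j=Suc (Suc 0)..Suc (Suc n). of_int ((-1)^j * ibinom (int n) (int j - 2)) * y^j)"
    by (simp add: sum.atLeast_Suc_atMost ibinom_neg)
  also have "\<dots> = (\<Sum>i=0..n. of_int ((-1)^(i+2) * ibinom (int n) (int (i+2) - 2)) * y^(i+2))"
    by (simp only: sum.shift_bounds_cl_Suc_ivl) (simp add: numeral_2_eq_2)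
  also have "\<dots> = (\<Sum>i=0..n. y^2 * (of_int ((-1)^i * ibinom (int n) (int i)) * y^i))"
    by (intro sum.cong refl) (simp add: power_add power2_eq_square algebra_simps)
  also have "\<dots> = y^2 * (1-y)^n"
    by (simp only: sum_distrib_left[symmetric] binom_full0)
  finally show ?thesis .
qed


lemma dd_reflect:
  assumes "m \<ge> 1" "l \<le> m"
  shows "(-1)^(2*m+1-l) * dd m (2*m+1-l) = (-1)^l * dd m l"
proof -
  define n where "n = 2*m-1"
  have n: "2*int m - 1 = int n" using assms unfolding n_def by simp
  have a: "ibinom (int n) (int (2*m+1-l) - 2) = ibinom (int n) (int l)"
  proof -
    have e: "int (2*m+1-l) - 2 = int (n - l)" using assms unfolding n_def by simp
    have "l \<le> n" using assms unfolding n_def by simp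
    then show ?thesis unfolding e ibinom_nat by (simp add: binomial_symmetric[symmetric])
  qed
  have b: "ibinom (int n) (int (2*m+1-l)) = ibinom (int n) (int l - 2)"
  proof (cases "l \<ge> 2")
    case True
    have e1: "int l - 2 = int (l - 2)" using True by simp
    have e2: "2*m+1-l = n - (l-2)" using assms True unfolding n_def by simp
    have "l - 2 \<le> n" using assms unfolding n_def by simp
    then show ?thesis unfolding e1 e2 ibinom_nat by (simp add: binomial_symmetric[symmetric])
  next
    case False
    have "n < 2*m+1-l" using assms False unfolding n_def by simp
    then show ?thesis using False unfolding ibinom_nat by (simp add: ibinom_neg binomial_eq_0)
  qed
  have s: "(-1::int)^(2*m+1-l) = - ((-1)^l)"
  proof -
    have "2*m+1-l = Suc (2*(m-l)) + l" using assms by simp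
    then show ?thesis by (simp add: power_add power_mult)
  qed
  show ?thesis unfolding dd_def n a b s by (simp add: algebra_simps)
qed


lemma dd_full:
  fixes y :: "'a::comm_ring_1"
  assumes "m \<ge> 1"
  shows "(\<Sum>j=0..2*m+1. of_int ((-1)^j * dd m j) * y^j) = (1-y^2)*(1-y)^(2*m-1)"
proof -
  define n where "n = 2*m-1"
  have n: "2*int m - 1 = int n" "2*m+1 = n+2" using assms unfolding n_def by auto
  have "(\<Sum>j=0..2*m+1. of_int ((-1)^j * dd m j) * y^j)
     = (\<Sum>j=0..n+2. of_int ((-1)^j * ibinom (int n) (int j)) * y^j - of_int ((-1)^j * ibinom (int n) (int j - 2)) * y^j)"
    unfolding n dd_def by (intro sum.cong refl) (simp add: algebra_simps)
  also have "\<dots> = (1-y)^n - y^2 * (1-y)^n"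
    by (simp only: sum_subtractf binom_full binom_shift2)
  finally show ?thesis unfolding n_def by (simp add: algebra_simps)
qed

lemma dd_identity:
  fixes y :: "'a::comm_ring_1"
  assumes m: "m \<ge> 1"
  shows "(1-y^2)*(1-y)^(2*m-1) = (\<Sum>l=0..m. of_int ((-1)^l * dd m l) * (y^l + y^(2*m+1-l)))"
proof -
  define F where "F j = of_int ((-1)^j * dd m j) * y^j" for j
  have "(1-y^2)*(1-y)^(2*m-1) = (\<Sum>j=0..m+(m+1). F j)"
    using dd_full[OF m, of y] unfolding F_def by (simp add: mult_2)
  also have "\<dots> = (\<Sum>j=0..m. F j) + (\<Sum>j=m+1..m+(m+1). F j)"
    by (rule sum.ub_add_nat) simp
  also have "(\<Sum>j=m+1..m+(m+1). F j) = (\<Sum>l=0..m. F (2*m+1-l))"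
    by (rule sum.reindex_bij_witness[of _ "\<lambda>l. 2*m+1-l" "\<lambda>j. 2*m+1-j"]) auto
  also have "\<dots> = (\<Sum>l=0..m. of_int ((-1)^l * dd m l) * y^(2*m+1-l))"
  proof (rule sum.cong[OF refl])
    fix l assume "l \<in> {0..m}"
    then have "(-1)^(2*m+1-l) * dd m (2*m+1-l) = (-1)^l * dd m l" using dd_reflect m by simp
    then show "F (2*m+1-l) = of_int ((-1)^l * dd m l) * y^(2*m+1-l)" unfolding F_def by simp
  qed
  finally show ?thesis unfolding F_def by (simp add: sum.distrib algebra_simps)
qed


definition DD :: "nat \<Rightarrow> 'a::field \<Rightarrow> 'a" where
  "DD m t = (1 - t^4) * (1 - t^2)^(2*m-1)"
definition ff :: "nat \<Rightarrow> 'a::field \<Rightarrow> 'a \<Rightarrow> 'a" where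
  "ff m t y = (1 - y^2) * (1 - y)^(2*m-1) / DD m t"
definition gg :: "nat \<Rightarrow> 'a::field \<Rightarrow> nat \<Rightarrow> 'a" where
  "gg m t l = (-1)^l * of_int (dd m l) / ((1 - t^(2*m-2*l+1)) * DD m t)"
definition WW :: "nat \<Rightarrow> 'a::field \<Rightarrow> 'a \<Rightarrow> 'a" where
  "WW m t x = (\<Sum>l=0..m. gg m t l * (x^l - t^(2*m-2*l+1) * x^(2*m+1-l)))"

locale tgen =
  fixes t :: "'a::field"
  assumes tpow: "\<And>j. j > 0 \<Longrightarrow> t^j \<noteq> 1"
begin

lemma one_minus_tpow: "j > 0 \<Longrightarrow> 1 - t^j \<noteq> 0"
  using tpow by simp

lemma DD_nz: "DD m t \<noteq> 0"
  unfolding DD_def using one_minus_tpow[of 4] one_minus_tpow[of 2] by simp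

lemma W_term:
  assumes "l \<le> m"
  shows "gg m t l * (((t^2*x)^l - t^(2*m-2*l+1) * (t^2*x)^(2*m+1-l)) - t^(2*m+1) * (x^l - t^(2*m-2*l+1) * x^(2*m+1-l)))
       = of_int ((-1)^l * dd m l) * ((t^2*x)^l + (t^2*x)^(2*m+1-l)) / DD m t"
proof -
  define P where "P = t^(2*l)"
  define A where "A = t^(2*m-2*l+1)"
  define B where "B = t^(2*(2*m+1-l))"
  have e1: "t^(2*m+1) = P * A" unfolding P_def A_def
    using assms by (simp add: power_add[symmetric])
  have e2: "P * A * A = B"
  proof -
    have "2*l + (2*m-2*l+1) + (2*m-2*l+1) = 2*(2*m+1-l)" using assms by simp
    then show ?thesis unfolding P_def A_def B_def by (metis power_add)
  qed
  have p1: "(t^2*x)^l = P * x^l" unfolding P_def by (simp add: power_mult_distrib power_mult)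
  have p2: "(t^2*x)^(2*m+1-l) = B * x^(2*m+1-l)" unfolding B_def by (simp add: power_mult_distrib power_mult)
  have br: "((t^2*x)^l - A * (t^2*x)^(2*m+1-l)) - t^(2*m+1) * (x^l - A * x^(2*m+1-l))
       = (1 - A) * ((t^2*x)^l + (t^2*x)^(2*m+1-l))"
    unfolding p1 p2 e1 using e2[symmetric] by (simp add: algebra_simps)
  have Anz: "1 - A \<noteq> 0" unfolding A_def by (rule one_minus_tpow) simp
  show ?thesis
    unfolding A_def[symmetric] br gg_def using Anz DD_nz[of m] by (simp add: field_simps)
qed

lemma W_rec:
  assumes m: "m \<ge> 1"
  shows "WW m t (t^2*x) - t^(2*m+1) * WW m t x = ff m t (t^2*x)"
proof -
  have "WW m t (t^2*x) - t^(2*m+1) * WW m t x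
     = (\<Sum>l=0..m. gg m t l * (((t^2*x)^l - t^(2*m-2*l+1) * (t^2*x)^(2*m+1-l)) - t^(2*m+1) * (x^l - t^(2*m-2*l+1) * x^(2*m+1-l))))"
    unfolding WW_def sum_distrib_left sum_subtractf[symmetric] by (intro sum.cong refl) (simp add: algebra_simps)
  also have "\<dots> = (\<Sum>l=0..m. of_int ((-1)^l * dd m l) * ((t^2*x)^l + (t^2*x)^(2*m+1-l)) / DD m t)"
    by (intro sum.cong refl W_term) simp
  also have "\<dots> = ff m t (t^2*x)"
    unfolding ff_def dd_identity[OF m] by (simp add: sum_divide_distrib)
  finally show ?thesis .
qed

lemma dd_sum_zero:
  assumes m: "m \<ge> 1"
  shows "(\<Sum>l=0..m. (-1)^l * dd m l) = 0"
proof -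
  have "(1 - (1::int)^2)*(1-1)^(2*m-1) = (\<Sum>l=0..m. of_int ((-1)^l * dd m l) * (1^l + (1::int)^(2*m+1-l)))"
    by (rule dd_identity[OF m])
  then have "0 = 2 * (\<Sum>l=0..m. (-1)^l * dd m l)" using m by (simp add: sum_distrib_left algebra_simps)
  then show ?thesis by simp
qed

lemma W_one:
  assumes m: "m \<ge> 1"
  shows "WW m t 1 = 0"
proof -
  have "WW m t 1 = (\<Sum>l=0..m. of_int ((-1)^l * dd m l) / DD m t)"
    unfolding WW_def
  proof (intro sum.cong refl)
    fix l assume "l \<in> {0..m}"
    have "1 - t^(2*m-2*l+1) \<noteq> 0" by (rule one_minus_tpow) simp
    then show "gg m t l * (1^l - t^(2*m-2*l+1) * 1^(2*m+1-l)) = of_int ((-1)^l * dd m l) / DD m t"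
      unfolding gg_def using DD_nz[of m] by (simp add: field_simps)
  qed
  also have "\<dots> = of_int (\<Sum>l=0..m. (-1)^l * dd m l) / DD m t"
    by (simp add: sum_divide_distrib)
  finally show ?thesis using dd_sum_zero[OF m] by simp
qed

lemma S_rec:
  assumes m: "m \<ge> 1"
  shows "S (2*m) (Suc n) t = t^(2*m+1) * S (2*m) n t + ff m t (t^2 * t^(2*n))"
proof -
  define A where "A k = (1 - t^(4*k)) / (1 - t^4) * ((1 - t^(2*k)) / (1 - t^2))^(2*m-1)" for k
  have SA: "S (2*m) N t = (\<Sum>k=1..N. A k * t^((2*m+1)*(N-k)))" for N
    unfolding S_def A_def by simp
  have "S (2*m) (Suc n) t = (\<Sum>k=1..n. A k * t^((2*m+1)*(Suc n-k))) + A (Suc n)"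
    unfolding SA by (simp add: sum.cl_ivl_Suc)
  also have "(\<Sum>k=1..n. A k * t^((2*m+1)*(Suc n-k))) = t^(2*m+1) * (\<Sum>k=1..n. A k * t^((2*m+1)*(n-k)))"
    unfolding sum_distrib_left
  proof (intro sum.cong refl)
    fix k assume "k \<in> {1..n}"
    then have "(2*m+1)*(Suc n-k) = (2*m+1) + (2*m+1)*(n-k)" by (simp add: Suc_diff_le)
    then show "A k * t^((2*m+1)*(Suc n-k)) = t^(2*m+1) * (A k * t^((2*m+1)*(n-k)))"
      by (simp add: power_add)
  qed
  also have "A (Suc n) = ff m t (t^2 * t^(2*n))"
  proof -
    have e: "t^2 * t^(2*n) = t^(2*Suc n)" by (simp add: power_add[symmetric])
    have e2: "(t^(2*Suc n))^2 = t^(4*Suc n)"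
    proof -
      have "4*Suc n = (2*Suc n)*2" by simp
      then show ?thesis by (simp only: power_mult)
    qed
    have "1 - t^4 \<noteq> 0" "1 - t^2 \<noteq> 0" using one_minus_tpow by auto
    then show ?thesis unfolding e ff_def A_def DD_def e2 by (simp add: power_divide)
  qed
  finally show ?thesis unfolding SA by simp
qed

lemma S_W:
  assumes m: "m \<ge> 1"
  shows "S (2*m) n t = WW m t (t^(2*n))"
proof (induction n)
  case 0 then show ?case using W_one[OF m] by (simp add: S_def)
next
  case (Suc n)
  have "S (2*m) (Suc n) t = t^(2*m+1) * WW m t (t^(2*n)) + ff m t (t^2 * t^(2*n))"
    using S_rec[OF m] Suc by simp
  also have "\<dots> = WW m t (t^2 * t^(2*n))" by (subst W_rec[OF m, symmetric]) simp
  also have "t^2 * t^(2*n) = t^(2*Suc n)" by (simp add: power_add[symmetric])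
  finally show ?case .
qed

end


lemma sum_triangle_swap:
  "(\<Sum>k=0..m. \<Sum>l=0..k. G l k) = (\<Sum>l=0..(m::nat). \<Sum>k=l..m. G l k)"
proof (induction m)
  case 0 then show ?case by simp
next
  case (Suc m)
  have "(\<Sum>l=0..Suc m. \<Sum>k=l..Suc m. G l k) = (\<Sum>l=0..Suc m. (\<Sum>k=l..m. G l k) + G l (Suc m))"
    by (intro sum.cong refl) (auto simp: sum.cl_ivl_Suc)
  also have "\<dots> = (\<Sum>l=0..m. \<Sum>k=l..m. G l k) + (\<Sum>l=0..Suc m. G l (Suc m))"
    by (simp add: sum.distrib sum.atLeast0_atMost_Suc[of "\<lambda>l. \<Sum>k=l..m. G l k"])
  finally show ?case using Suc by (simp add: sum.atLeast0_atMost_Suc[of "\<lambda>k. \<Sum>l=0..k. G l k"])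
qed

lemma alg_term:
  fixes P A U V W s s' s'' d h N1 N2 xk :: "'a::field"
  assumes "P \<noteq> 0" "A \<noteq> 0" "U \<noteq> 0" "V \<noteq> 0" "W \<noteq> 0" "s * s' = s''"
  shows "s * (P / (U^k * V^(2*k)) * (s' / A * d * h)) * (N1 * N2 * U^k * xk) / (W * (V^j / V^(2*k)) * P)
       = (s'' * d / (A * (W * V^j))) * h * (xk * N1 * N2)"
proof -
  have "s * (P / (U^k * V^(2*k)) * (s' / A * d * h)) * (N1 * N2 * U^k * xk) / (W * (V^j / V^(2*k)) * P)
     = (s * s') * d * h * (xk * N1 * N2) * ((P * U^k * V^(2*k)) / (U^k * V^(2*k) * P)) / (A * (W * V^j))"
    using assms by (simp add: divide_simps)
  also have "(P * U^k * V^(2*k)) / (U^k * V^(2*k) * P) = 1" using assms by simp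
  finally show ?thesis using assms by simp
qed

context tgen
begin

definition PP :: "nat \<Rightarrow> nat \<Rightarrow> 'a" where
  "PP m k = (\<Prod>i=0..k. 1 - t^(2*m-2*i+1))"

lemma PP_nz: "PP m k \<noteq> 0"
proof -
  have h: "\<forall>i\<in>{0..k}. 1 - t^(2*m-2*i+1) \<noteq> 0" by (intro ballI one_minus_tpow) simp
  show ?thesis unfolding PP_def using h by (simp only: prod_zero_iff finite_atLeastAtMost) blast
qed

lemma Q_unfold:
  "Q m k t = PP m k / ((1 - t)^k * (1 - t^2)^(2*k))
     * (\<Sum>l=0..k. (-1)^(k-l) / (1 - t^(2*m-2*l+1)) * of_int (dd m l) * HH m k l t)"
  unfolding Q_def PP_def dd_def HH_def by simp

lemma powi_split:
  assumes "m \<ge> 1" "k \<le> m"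
  shows "(1 - t^2) powi (2*int m - 2*int k - 1) = (1 - t^2)^(2*m-1) / (1 - t^2)^(2*k)"
proof -
  have nz: "1 - t^2 \<noteq> 0" using one_minus_tpow[of 2] by simp
  have e: "2*int m - 2*int k - 1 = int (2*m-1) - int (2*k)" using assms by simp
  have d: "(1 - t^2) powi (int (2*m-1) - int (2*k)) = (1 - t^2) powi (int (2*m-1)) / (1 - t^2) powi (int (2*k))"
    by (rule power_int_diff) (rule disjI1, rule nz)
  show ?thesis by (simp only: e d power_int_of_nat)
qed

lemma main_term:
  fixes n :: nat
  assumes m: "m \<ge> 1" and k: "k \<le> m"
  defines "x \<equiv> t^(2*n)"
  shows "(-1)^k * Q m k t
            * ((1 - t^(2*n+1)) * (1 - t^(2*n))^(m-k) * (1 - t^(2*n+2))^(m-k)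
               * (1 - t)^k * t^(2*k*n))
            / ((1 - t^4) * (1 - t^2) powi (2*int m - 2*int k - 1)
               * (\<Prod>i=0..k. 1 - t^(2*m-2*i+1)))
       = (\<Sum>l=0..k. gg m t l * HH m k l t * (x^k * (1 - t*x) * ((1-x)*(1-t^2*x))^(m-k)))"
proof -
  have ex: "t^(2*n+1) = t*x" "t^(2*n+2) = t^2*x" "t^(2*k*n) = x^k"
    unfolding x_def by (simp_all add: power_add power_mult[symmetric] mult.commute mult.left_commute power2_eq_square)
  define N1 where "N1 = 1 - t*x"
  define N2 where "N2 = ((1-x)*(1-t^2*x))^(m-k)"
  have lhs: "(-1)^k * Q m k t
            * ((1 - t^(2*n+1)) * (1 - t^(2*n))^(m-k) * (1 - t^(2*n+2))^(m-k)
               * (1 - t)^k * t^(2*k*n))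
            / ((1 - t^4) * (1 - t^2) powi (2*int m - 2*int k - 1)
               * (\<Prod>i=0..k. 1 - t^(2*m-2*i+1)))
      = (\<Sum>l=0..k. (-1)^k * (PP m k / ((1 - t)^k * (1 - t^2)^(2*k))
           * ((-1)^(k-l) / (1 - t^(2*m-2*l+1)) * of_int (dd m l) * HH m k l t))
           * (N1 * N2 * (1-t)^k * x^k) / ((1 - t^4) * ((1 - t^2)^(2*m-1) / (1 - t^2)^(2*k)) * PP m k))"
    unfolding Q_unfold powi_split[OF m k] ex N1_def N2_def
    by (simp add: sum_distrib_left sum_distrib_right sum_divide_distrib PP_def power_mult_distrib x_def)
  also have "\<dots> = (\<Sum>l=0..k. gg m t l * HH m k l t * (x^k * N1 * N2))"
  proof (intro sum.cong refl)
    fix l assume l: "l \<in> {0..k}"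
    have s: "(-1)^k * (-1)^(k-l) = ((-1)^l :: 'a)"
    proof -
      have e: "k + (k-l) = 2*(k-l) + l" using l by simp
      have "(-1)^k * (-1)^(k-l) = ((-1)^(k+(k-l)) :: 'a)" by (simp only: power_add)
      also have "\<dots> = (-1)^(2*(k-l)+l)" by (simp only: e)
      finally show ?thesis by (simp add: power_add power_mult)
    qed
    have A: "1 - t^(2*m-2*l+1) \<noteq> 0" by (rule one_minus_tpow) simp
    have U: "1 - t \<noteq> 0" using one_minus_tpow[of 1] by simp
    have V: "1 - t^2 \<noteq> 0" using one_minus_tpow[of 2] by simp
    have W: "1 - t^4 \<noteq> 0" using one_minus_tpow[of 4] by simp
    show "(-1)^k * (PP m k / ((1 - t)^k * (1 - t^2)^(2*k))
           * ((-1)^(k-l) / (1 - t^(2*m-2*l+1)) * of_int (dd m l) * HH m k l t))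
           * (N1 * N2 * (1-t)^k * x^k) / ((1 - t^4) * ((1 - t^2)^(2*m-1) / (1 - t^2)^(2*k)) * PP m k)
        = gg m t l * HH m k l t * (x^k * N1 * N2)"
      unfolding alg_term[OF PP_nz A U V W s] gg_def DD_def by simp
  qed
  finally show ?thesis unfolding N1_def N2_def by simp
qed

end

context tgen
begin

lemma main_identity:
  fixes n :: nat
  assumes m: "m \<ge> 1"
  shows "S (2*m) n t =
         (\<Sum>k=0..m. (-1)^k * Q m k t
            * ((1 - t^(2*n+1)) * (1 - t^(2*n))^(m-k) * (1 - t^(2*n+2))^(m-k)
               * (1 - t)^k * t^(2*k*n))
            / ((1 - t^4) * (1 - t^2) powi (2*int m - 2*int k - 1)
               * (\<Prod>i=0..k. 1 - t^(2*m-2*i+1))))"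
proof -
  define x where "x = t^(2*n)"
  have "(\<Sum>k=0..m. (-1)^k * Q m k t
            * ((1 - t^(2*n+1)) * (1 - t^(2*n))^(m-k) * (1 - t^(2*n+2))^(m-k)
               * (1 - t)^k * t^(2*k*n))
            / ((1 - t^4) * (1 - t^2) powi (2*int m - 2*int k - 1)
               * (\<Prod>i=0..k. 1 - t^(2*m-2*i+1))))
     = (\<Sum>k=0..m. \<Sum>l=0..k. gg m t l * HH m k l t * (x^k * (1 - t*x) * ((1-x)*(1-t^2*x))^(m-k)))"
    unfolding x_def using m by (intro sum.cong refl main_term) auto
  also have "\<dots> = (\<Sum>l=0..m. \<Sum>k=l..m. gg m t l * HH m k l t * (x^k * (1 - t*x) * ((1-x)*(1-t^2*x))^(m-k)))"
    by (rule sum_triangle_swap)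
  also have "\<dots> = (\<Sum>l=0..m. gg m t l * (x^l - t^(2*m-2*l+1) * x^(2*m+1-l)))"
  proof (intro sum.cong refl)
    fix l assume l: "l \<in> {0..m}"
    have "(\<Sum>k=l..m. gg m t l * HH m k l t * (x^k * (1 - t*x) * ((1-x)*(1-t^2*x))^(m-k)))
        = gg m t l * (\<Sum>k=l..m. HH m k l t * (x^k * (1 - t*x) * ((1-x)*(1-t^2*x))^(m-k)))"
      by (simp add: sum_distrib_left mult.assoc)
    also have "\<dots> = gg m t l * (x^l - t^(2*m-2*l+1) * x^(2*m+1-l))"
      using T_identity[of l m t x] l by simp
    finally show "(\<Sum>k=l..m. gg m t l * HH m k l t * (x^k * (1 - t*x) * ((1-x)*(1-t^2*x))^(m-k)))
        = gg m t l * (x^l - t^(2*m-2*l+1) * x^(2*m+1-l))" .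
  qed
  also have "\<dots> = S (2*m) n t"
    unfolding S_W[OF m] WW_def x_def ..
  finally show ?thesis by simp
qed

end

type_synonym F = "int poly fract"

definition reg :: "F \<Rightarrow> bool" where
  "reg z \<longleftrightarrow> (\<exists>a b. poly b 1 \<noteq> 0 \<and> poly b (-1) \<noteq> 0 \<and> z = to_fract a / to_fract b)"

definition ureg :: "F \<Rightarrow> bool" where
  "ureg z \<longleftrightarrow> (\<exists>a b. poly a 1 \<noteq> 0 \<and> poly a (-1) \<noteq> 0 \<and> poly b 1 \<noteq> 0 \<and> poly b (-1) \<noteq> 0
      \<and> z = to_fract a / to_fract b)"

definition isp :: "F \<Rightarrow> bool" where
  "isp z \<longleftrightarrow> (\<exists>p. z = to_fract p)"

lemma nz_of_eval: "poly (b::int poly) c \<noteq> 0 \<Longrightarrow> to_fract b \<noteq> 0"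
  by auto

lemma reg_add: "reg x \<Longrightarrow> reg y \<Longrightarrow> reg (x + y)"
proof -
  assume "reg x" "reg y"
  then obtain a b c d where ab: "poly b 1 \<noteq> 0" "poly b (-1) \<noteq> 0" "x = to_fract a / to_fract b"
    and cd: "poly d 1 \<noteq> 0" "poly d (-1) \<noteq> 0" "y = to_fract c / to_fract d"
    unfolding reg_def by blast
  have "x + y = to_fract (a*d + c*b) / to_fract (b*d)"
    using ab cd nz_of_eval[of b 1] nz_of_eval[of d 1] by (simp add: field_simps)
  moreover have "poly (b*d) 1 \<noteq> 0" "poly (b*d) (-1) \<noteq> 0" using ab cd by auto
  ultimately show ?thesis unfolding reg_def by blast
qed

lemma reg_mult: "reg x \<Longrightarrow> reg y \<Longrightarrow> reg (x * y)"
proof -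
  assume "reg x" "reg y"
  then obtain a b c d where ab: "poly b 1 \<noteq> 0" "poly b (-1) \<noteq> 0" "x = to_fract a / to_fract b"
    and cd: "poly d 1 \<noteq> 0" "poly d (-1) \<noteq> 0" "y = to_fract c / to_fract d"
    unfolding reg_def by blast
  have "x * y = to_fract (a*c) / to_fract (b*d)"
    using ab cd by simp
  moreover have "poly (b*d) 1 \<noteq> 0" "poly (b*d) (-1) \<noteq> 0" using ab cd by auto
  ultimately show ?thesis unfolding reg_def by blast
qed

lemma reg_uminus: "reg x \<Longrightarrow> reg (- x)"
  unfolding reg_def by (metis minus_divide_left to_fract_uminus)

lemma reg_diff: "reg x \<Longrightarrow> reg y \<Longrightarrow> reg (x - y)"
  using reg_add[of x "-y"] reg_uminus[of y] by simp

lemma isp_reg: "isp x \<Longrightarrow> reg x"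
  unfolding isp_def reg_def by (metis div_by_1 one_poly_eq_simps(1) poly_1 to_fract_1 zero_neq_one)

lemma ureg_reg: "ureg x \<Longrightarrow> reg x"
  unfolding ureg_def reg_def by blast

lemma ureg_inverse: "ureg x \<Longrightarrow> reg (inverse x)"
  unfolding ureg_def reg_def by (metis inverse_divide)

lemma ureg_nz: "ureg x \<Longrightarrow> x \<noteq> 0"
  unfolding ureg_def by (auto simp: nz_of_eval)

lemma ureg_mult: "ureg x \<Longrightarrow> ureg y \<Longrightarrow> ureg (x * y)"
proof -
  assume "ureg x" "ureg y"
  then obtain a b c d where ab: "poly a 1 \<noteq> 0" "poly a (-1) \<noteq> 0" "poly b 1 \<noteq> 0" "poly b (-1) \<noteq> 0" "x = to_fract a / to_fract b"
    and cd: "poly c 1 \<noteq> 0" "poly c (-1) \<noteq> 0" "poly d 1 \<noteq> 0" "poly d (-1) \<noteq> 0" "y = to_fract c / to_fract d"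
    unfolding ureg_def by blast
  have "x * y = to_fract (a*c) / to_fract (b*d)"
    using ab cd by simp
  moreover have "poly (a*c) 1 \<noteq> 0" "poly (a*c) (-1) \<noteq> 0" "poly (b*d) 1 \<noteq> 0" "poly (b*d) (-1) \<noteq> 0" using ab cd by auto
  ultimately show ?thesis unfolding ureg_def by blast
qed

lemma ureg_inverse_u: "ureg x \<Longrightarrow> ureg (inverse x)"
  unfolding ureg_def by (metis inverse_divide)

lemma ureg_poly: "poly p 1 \<noteq> 0 \<Longrightarrow> poly p (-1) \<noteq> 0 \<Longrightarrow> ureg (to_fract p)"
  unfolding ureg_def by (rule exI[of _ p], rule exI[of _ 1]) simp

lemma isp_add: "isp x \<Longrightarrow> isp y \<Longrightarrow> isp (x + y)"
  unfolding isp_def by (metis to_fract_add)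
lemma isp_mult: "isp x \<Longrightarrow> isp y \<Longrightarrow> isp (x * y)"
  unfolding isp_def by (metis to_fract_mult)
lemma isp_uminus: "isp x \<Longrightarrow> isp (- x)"
  unfolding isp_def by (metis to_fract_uminus)
lemma isp_diff: "isp x \<Longrightarrow> isp y \<Longrightarrow> isp (x - y)"
  unfolding isp_def by (metis to_fract_diff)
lemma isp_0: "isp 0" unfolding isp_def by (metis to_fract_0)
lemma isp_1: "isp 1" unfolding isp_def by (metis to_fract_1)
lemma isp_sum: "(\<And>i. i \<in> A \<Longrightarrow> isp (f i)) \<Longrightarrow> isp (sum f A)"
proof (induction A rule: infinite_finite_induct)
  case (infinite A) then show ?case by (simp add: isp_0)
next
  case empty then show ?case by (simp add: isp_0)
next
  case (insert x F) then show ?case by (simp add: isp_add)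
qed
lemma isp_prod: "(\<And>i. i \<in> A \<Longrightarrow> isp (f i)) \<Longrightarrow> isp (prod f A)"
proof (induction A rule: infinite_finite_induct)
  case (infinite A) then show ?case by (simp add: isp_1)
next
  case empty then show ?case by (simp add: isp_1)
next
  case (insert x F) then show ?case by (simp add: isp_mult)
qed
lemma isp_power: "isp x \<Longrightarrow> isp (x^n)"
  by (induction n) (simp_all add: isp_1 isp_mult)
lemma isp_of_nat: "isp (of_nat n)"
  unfolding isp_def by (rule exI[of _ "of_nat n"]) (induction n, simp_all)
lemma isp_of_int: "isp (of_int n)"
  by (cases n rule: int_cases) (metis isp_of_nat of_int_of_nat_eq, metis isp_of_nat isp_uminus of_int_minus of_int_of_nat_eq)
lemma isp_X: "isp X"
  unfolding isp_def X_def to_fract_def by blast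

lemma reg_sum: "(\<And>i. i \<in> A \<Longrightarrow> reg (f i)) \<Longrightarrow> reg (sum f A)"
proof (induction A rule: infinite_finite_induct)
  case (infinite A) then show ?case by (simp add: isp_reg isp_0)
next
  case empty then show ?case by (simp add: isp_reg isp_0)
next
  case (insert x F) then show ?case by (simp add: reg_add)
qed

lemma ureg_prod: "(\<And>i. i \<in> A \<Longrightarrow> ureg (f i)) \<Longrightarrow> ureg (prod f A)"
proof (induction A rule: infinite_finite_induct)
  case (infinite A) then show ?case using ureg_poly[of 1] by simp
next
  case empty then show ?case using ureg_poly[of 1] by simp
next
  case (insert x F) then show ?case by (simp add: ureg_mult)
qed

lemma ureg_power: "ureg x \<Longrightarrow> ureg (x^n)"
  by (induction n) (use ureg_poly[of 1] in \<open>simp_all add: ureg_mult\<close>)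


lemma to_fract_power: "to_fract (x^n) = to_fract x ^ n"
  by (induction n) simp_all

lemma X_pow: "X^j = to_fract ([:0,1:]^j)"
  unfolding X_def to_fract_def[symmetric] by (simp add: to_fract_power)

lemma X_pow_ne1: "j > 0 \<Longrightarrow> X^j \<noteq> 1"
proof
  assume j: "j > 0" and "X^j = 1"
  then have "[:0,1::int:]^j = 1" unfolding X_pow by (metis to_fract_1 to_fract_eq_iff)
  then have "monom (1::int) j = 1" by (simp add: monom_altdef)
  then show False using j by (simp add: monom_eq_1_iff)
qed

interpretation XX: tgen X
  by unfold_locales (rule X_pow_ne1)

definition qt :: "nat \<Rightarrow> F" where "qt a = (\<Sum>i<a. X^i)"
definition qq :: "nat \<Rightarrow> F" where "qq a = (\<Sum>i<a. (X^2)^i)"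

lemma qt_to_fract: "qt a = to_fract (\<Sum>i<a. [:0,1:]^i)"
  unfolding qt_def X_pow by simp

lemma qq_to_fract: "qq a = to_fract (\<Sum>i<a. [:0,0,1:]^i)"
proof -
  have "[:0,1::int:]^2 = [:0,0,1:]" by (simp add: power2_eq_square)
  then show ?thesis unfolding qq_def X_pow power_mult[symmetric]
    by (simp add: power_mult to_fract_power)
qed

lemma poly_sum_int: "poly (\<Sum>i<a. p^i) c = (\<Sum>i<a. (poly p c)^i)"
  by (simp add: poly_sum)

lemma ureg_qq: "a > 0 \<Longrightarrow> ureg (qq a)"
  unfolding qq_to_fract by (rule ureg_poly) (simp_all add: poly_sum)

lemma sum_neg1_odd: "odd a \<Longrightarrow> (\<Sum>i<a. (-1::int)^i) = 1"
proof (induction a rule: less_induct)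
  case (less a)
  show ?case
  proof (cases "a = 1")
    case True then show ?thesis by simp
  next
    case False
    then obtain b where b: "a = Suc (Suc b)" "odd b" using less.prems
      by (metis odd_Suc_minus_one odd_pos Suc_pred even_Suc not_less_eq less_one nat.exhaust)
    then have "(\<Sum>i<a. (-1::int)^i) = (\<Sum>i<b. (-1::int)^i)" by simp
    also have "\<dots> = 1" using less.IH[of b] b by simp
    finally show ?thesis .
  qed
qed

lemma ureg_qt: "odd a \<Longrightarrow> ureg (qt a)"
  unfolding qt_to_fract
proof (rule ureg_poly)
  assume a: "odd a"
  then have "a > 0" by (simp add: odd_pos)
  then show "poly (\<Sum>i<a. [:0, 1:] ^ i) 1 \<noteq> (0::int)" by (simp add: poly_sum)
  show "poly (\<Sum>i<a. [:0, 1:] ^ i) (-1) \<noteq> (0::int)" using sum_neg1_odd[OF a] by (simp add: poly_sum)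
qed

lemma ureg_X: "ureg X"
  unfolding X_def to_fract_def[symmetric] by (rule ureg_poly) simp_all

lemma isp_qt: "isp (qt a)" unfolding qt_to_fract isp_def by blast
lemma isp_qq: "isp (qq a)" unfolding qq_to_fract isp_def by blast

lemma one_minus_Xpow: "1 - X^a = (1 - X) * qt a"
  unfolding qt_def by (rule one_diff_power_eq)

lemma one_minus_qpow: "1 - (X^2)^a = (1 - X^2) * qq a"
  unfolding qq_def by (rule one_diff_power_eq)


lemma newton_coeffs:
  fixes p :: "'a::field poly" and \<nu> :: "nat \<Rightarrow> 'a" and P :: "'a \<Rightarrow> bool"
  assumes Padd: "\<And>a b. P a \<Longrightarrow> P b \<Longrightarrow> P (a + b)"
    and Pmult: "\<And>a b. P a \<Longrightarrow> P b \<Longrightarrow> P (a * b)"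
    and Pneg: "\<And>a. P a \<Longrightarrow> P (- a)"
    and P0: "P 0"
  shows "degree p \<le> M \<Longrightarrow> (\<forall>j\<le>M. P (\<nu> j)) \<Longrightarrow>
         (\<forall>i j. j < i \<longrightarrow> i \<le> M \<longrightarrow> \<nu> i \<noteq> \<nu> j \<and> P (inverse (\<nu> i - \<nu> j))) \<Longrightarrow>
         (\<forall>j\<le>M. P (poly p (\<nu> j))) \<Longrightarrow> P (coeff p i)"
proof (induction M arbitrary: p \<nu> i)
  case 0
  then have "p = [:coeff p 0:]" by (metis degree_0_id le_zero_eq)
  then have "coeff p 0 = poly p (\<nu> 0)" by (metis poly_pCons poly_0 mult_zero_right add.right_neutral)
  then show ?case using 0 P0 by (cases i) (auto simp: coeff_eq_0)
next
  case (Suc M)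
  define c where "c = \<nu> 0"
  define p' where "p' = synthetic_div p c"
  have pe: "p = [:-c, 1:] * p' + [:poly p c:]" unfolding p'_def using synthetic_div_correct' [of c p] by simp
  have dp': "degree p' \<le> M" unfolding p'_def degree_synthetic_div using Suc.prems(1) by simp
  have pv: "poly p y = (y - c) * poly p' y + poly p c" for y
    by (subst pe) (simp add: algebra_simps)
  have IH: "P (coeff p' i')" for i'
  proof (rule Suc.IH[of p' "\<lambda>j. \<nu> (Suc j)"])
    show "degree p' \<le> M" by (rule dp')
    show "\<forall>j\<le>M. P (\<nu> (Suc j))" using Suc.prems(2) by auto
    show "\<forall>i j. j < i \<longrightarrow> i \<le> M \<longrightarrow> \<nu> (Suc i) \<noteq> \<nu> (Suc j) \<and> P (inverse (\<nu> (Suc i) - \<nu> (Suc j)))"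
      using Suc.prems(3) by auto
    show "\<forall>j\<le>M. P (poly p' (\<nu> (Suc j)))"
    proof (intro allI impI)
      fix j assume j: "j \<le> M"
      have ne: "\<nu> (Suc j) - c \<noteq> 0" and Pi: "P (inverse (\<nu> (Suc j) - c))"
        using Suc.prems(3)[rule_format, of 0 "Suc j"] j unfolding c_def by auto
      have "poly p' (\<nu> (Suc j)) = (poly p (\<nu> (Suc j)) + - poly p c) * inverse (\<nu> (Suc j) - c)"
        using pv[of "\<nu> (Suc j)"] ne by (simp add: field_simps)
      moreover have "P (poly p (\<nu> (Suc j)))" "P (poly p c)"
        using Suc.prems(4) j unfolding c_def by auto
      ultimately show "P (poly p' (\<nu> (Suc j)))" using Padd Pmult Pneg Pi by metis
    qed
  qed
  have Pc: "P c" using Suc.prems(2) unfolding c_def by auto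
  have Ppc: "P (poly p c)" using Suc.prems(4) unfolding c_def by auto
  have "coeff p i = coeff (pCons 0 p') i + - c * coeff p' i + coeff [:poly p c:] i"
    by (subst pe) (cases i, simp_all add: mult_pCons_left algebra_simps coeff_pCons)
  moreover have "P (coeff (pCons 0 p') i)" using IH P0 by (cases i) auto
  moreover have "P (- c * coeff p' i)" using IH Pc Pmult Pneg by metis
  moreover have "P (coeff [:poly p c:] i)" using Ppc P0 by (cases i) auto
  ultimately show ?case using Padd by metis
qed


lemma geo_div: "y \<noteq> 1 \<Longrightarrow> (1 - y^k) / (1 - y) = (\<Sum>i<k. (y::'a::field)^i)"
  using one_diff_power_eq[of y k] by (simp add: field_simps)

lemma isp_S: "isp (S (2*m) n X)"
  unfolding S_def
proof (intro isp_sum isp_mult isp_power)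
  fix k
  have h4: "X^4 \<noteq> 1" "X^2 \<noteq> 1" using X_pow_ne1 by auto
  have "(1 - X^(4*k)) / (1 - X^4) = (\<Sum>i<k. (X^4)^i)"
    using geo_div[OF h4(1), of k] by (simp add: power_mult)
  then show "isp ((1 - X^(4*k)) / (1 - X^4))" by (simp add: isp_sum isp_power isp_X)
  have "(1 - X^(2*k)) / (1 - X^2) = (\<Sum>i<k. (X^2)^i)"
    using geo_div[OF h4(2), of k] by (simp add: power_mult)
  then show "isp ((1 - X^(2*k)) / (1 - X^2))" by (simp add: isp_sum isp_power isp_X)
  show "isp X" by (rule isp_X)
qed

lemma nu_diff_gen:
  fixes q :: "'a::field"
  assumes q0: "q \<noteq> 0" and q1: "q \<noteq> 1" and ji: "j < i"
  defines "G \<equiv> \<lambda>n. (\<Sum>l<n. q^l)"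
  shows "inverse (q^i) * G i * G (Suc i) - inverse (q^j) * G j * G (Suc j) = inverse (q^i) * G (i-j) * G (i+j+1)"
proof -
  define K where "K = 1 - q"
  have Gn: "G n = (1 - q^n) / K" for n
    unfolding G_def K_def using geo_div[of q n] q1 by simp
  define d where "d = i - j"
  have i: "i = j + d" unfolding d_def using ji by simp
  define A where "A = q^j"
  define B where "B = q^d"
  have pw: "q^i = A*B" "q^(Suc i) = q*A*B" "q^(Suc j) = q*A" "q^(i+j+1) = q*A*A*B"
    unfolding i A_def B_def by (simp_all add: power_add algebra_simps)
  have A0: "A \<noteq> 0" "B \<noteq> 0" unfolding A_def B_def using q0 by simp_all
  have qq: "K \<noteq> 0" using q1 unfolding K_def by simp
  have key: "(1-A*B)*(1-q*A*B) - B*((1-A)*(1-q*A)) = (1-B)*(1-q*A*A*B)"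
    by (simp add: algebra_simps)
  have "inverse (A*B) * ((1 - A*B) / K) * ((1 - q*A*B) / K) - inverse A * ((1 - A) / K) * ((1 - q*A) / K)
      = ((1-A*B)*(1-q*A*B) - B*((1-A)*(1-q*A))) / (A*B*K*K)"
    using A0 qq by (simp add: field_simps)
  also have "\<dots> = inverse (A*B) * ((1 - B) / K) * ((1 - q*A*A*B) / K)"
    unfolding key using A0 qq by (simp add: field_simps)
  finally show ?thesis
    unfolding Gn pw d_def[symmetric] B_def[symmetric] A_def[symmetric] .
qed

definition nu :: "nat \<Rightarrow> F" where
  "nu j = inverse ((X^2)^j) * qq j * qq (Suc j)"

lemma ureg_q: "ureg ((X^2)^j)" by (intro ureg_power ureg_X)

lemma reg_nu: "reg (nu j)"
  unfolding nu_def by (intro reg_mult ureg_inverse ureg_q isp_reg isp_qq)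

lemma nu_diff: "j < i \<Longrightarrow> nu i - nu j = inverse ((X^2)^i) * qq (i-j) * qq (i+j+1)"
  unfolding nu_def qq_def
  by (rule nu_diff_gen) (use X_pow_ne1[of 2] in \<open>auto simp: X_def to_fract_def[symmetric]\<close>)

lemma nu_props: "j < i \<Longrightarrow> nu i \<noteq> nu j \<and> reg (inverse (nu i - nu j))"
proof -
  assume ji: "j < i"
  have u: "ureg (nu i - nu j)" unfolding nu_diff[OF ji]
    using ji by (intro ureg_mult ureg_inverse_u ureg_q ureg_qq) auto
  show ?thesis using ureg_nz[OF u] ureg_inverse[OF u] by simp
qed


lemma alg2:
  fixes U V Wp G C R P1 P2 P3 Nm Xa Xb Xm Uk :: "'a::field"
  assumes "U \<noteq> 0" "V \<noteq> 0" "Wp \<noteq> 0" "C \<noteq> 0" "R \<noteq> 0" "P2 \<noteq> 0" "Uk \<noteq> 0" "P3 \<noteq> 0"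
    and P1: "P1 = V*P3/P2" and Xm: "Xm = Xa*Xb"
  shows "(U*G) * (P1*Nm*Xa) * Uk * Xb / ((V*Wp) * (P3/P2) * (U*Uk*C*R)) = G*Xm/(Wp*C) * Nm / R"
  unfolding P1 Xm using assms(1-8) by (simp add: field_simps)

definition Rk :: "nat \<Rightarrow> nat \<Rightarrow> F" where
  "Rk m k = (\<Prod>i=1..k. qt (2*m-2*i+1))"

definition rho :: "nat \<Rightarrow> nat \<Rightarrow> F" where
  "rho m n = qt (2*n+1) * ((X^2)^n)^m / (qq 2 * qt (2*m+1))"

lemma ureg_Rk: "ureg (Rk m k)"
  unfolding Rk_def by (intro ureg_prod ureg_qt) simp

lemma qq2: "qq 2 = 1 + X^2" unfolding qq_def by (simp add: numeral_2_eq_2)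

lemma frac_k:
  assumes m: "m \<ge> 1" and k: "k \<le> m"
  shows "((1 - X^(2*n+1)) * (1 - X^(2*n))^(m-k) * (1 - X^(2*n+2))^(m-k)
               * (1 - X)^k * X^(2*k*n))
            / ((1 - X^4) * (1 - X^2) powi (2*int m - 2*int k - 1)
               * (\<Prod>i=0..k. 1 - X^(2*m-2*i+1)))
        = rho m n * (nu n)^(m-k) / Rk m k"
proof -
  define U where "U = 1 - X"
  define V where "V = 1 - X^2"
  define Wp where "Wp = qq 2"
  define G where "G = qt (2*n+1)"
  define C where "C = qt (2*m+1)"
  define R where "R = Rk m k"
  define x where "x = (X^2)^n"
  define P1 where "P1 = V^(2*(m-k))"
  define P2 where "P2 = V^(2*k)"
  define P3 where "P3 = V^(2*m-1)"
  define Nm where "Nm = (nu n)^(m-k)"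
  define Xa where "Xa = x^(m-k)"
  define Xb where "Xb = x^k"
  define Xm where "Xm = x^m"
  define Uk where "Uk = U^k"
  have U0: "U \<noteq> 0" unfolding U_def using X_pow_ne1[of 1] by auto
  have V0: "V \<noteq> 0" unfolding V_def using X_pow_ne1[of 2] by auto
  have W0: "Wp \<noteq> 0" unfolding Wp_def using ureg_nz ureg_qq by simp
  have C0: "C \<noteq> 0" unfolding C_def using ureg_nz ureg_qt by simp
  have R0: "R \<noteq> 0" unfolding R_def using ureg_nz ureg_Rk by simp
  have x0: "x \<noteq> 0" unfolding x_def using ureg_nz[OF ureg_q[of n]] .
  have P20: "P2 \<noteq> 0" "P3 \<noteq> 0" unfolding P2_def P3_def using V0 by simp_all
  have Uk0: "Uk \<noteq> 0" unfolding Uk_def using U0 by simp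
  have P1e: "P1 = V*P3/P2"
  proof -
    have "2*(m-k) + 2*k = Suc (2*m-1)" using m k by simp
    then have "P1 * P2 = V * P3" unfolding P1_def P2_def P3_def by (metis power_add power_Suc)
    then show ?thesis using P20 by (simp add: field_simps)
  qed
  have Xme: "Xm = Xa*Xb" unfolding Xm_def Xa_def Xb_def using k by (simp add: power_add[symmetric])
  have a: "1 - X^(2*n+1) = U * G" unfolding U_def G_def by (rule one_minus_Xpow)
  have b1: "1 - X^(2*n) = V * qq n" unfolding V_def using one_minus_qpow[of n] by (simp add: power_mult)
  have e22: "X^(2*n+2) = (X^2)^(Suc n)"
  proof -
    have "2*n+2 = 2*Suc n" by simp
    then show ?thesis by (simp only: power_mult)
  qed
  have b2: "1 - X^(2*n+2) = V * qq (Suc n)" unfolding V_def e22 by (rule one_minus_qpow)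
  have nux: "qq n * qq (Suc n) = x * nu n" unfolding nu_def x_def[symmetric] using x0 by simp
  have b: "(1 - X^(2*n))^(m-k) * (1 - X^(2*n+2))^(m-k) = P1 * Nm * Xa"
  proof -
    have "(1 - X^(2*n))^(m-k) * (1 - X^(2*n+2))^(m-k) = (V^2 * (qq n * qq (Suc n)))^(m-k)"
      unfolding b1 b2 by (simp add: power_mult_distrib power2_eq_square algebra_simps)
    also have "\<dots> = P1 * Nm * Xa" unfolding nux P1_def Nm_def Xa_def
      by (simp add: power_mult_distrib power_mult[symmetric] algebra_simps)
    finally show ?thesis .
  qed
  have c: "X^(2*k*n) = Xb" unfolding Xb_def x_def by (simp add: power_mult[symmetric] mult.commute mult.left_commute)
  have d1: "1 - X^4 = V * Wp" unfolding V_def Wp_def qq2 by (simp add: algebra_simps power_add[symmetric])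
  have d2: "(1 - X^2) powi (2*int m - 2*int k - 1) = P3 / P2"
    unfolding P3_def P2_def V_def using XX.powi_split[OF m k] .
  have d3: "(\<Prod>i=0..k. 1 - X^(2*m-2*i+1)) = U * Uk * C * R"
  proof -
    have "(\<Prod>i=0..k. 1 - X^(2*m-2*i+1)) = (\<Prod>i=0..k. U * qt (2*m-2*i+1))"
      unfolding U_def by (intro prod.cong refl one_minus_Xpow)
    also have "\<dots> = U^(Suc k) * (\<Prod>i=0..k. qt (2*m-2*i+1))"
      by (simp add: prod.distrib)
    also have "(\<Prod>i=0..k. qt (2*m-2*i+1)) = qt (2*m+1) * Rk m k"
      unfolding Rk_def by (subst prod.atLeast_Suc_atMost) simp_all
    finally show ?thesis unfolding Uk_def C_def R_def by simp
  qed
  have NUMe: "((1 - X^(2*n+1)) * (1 - X^(2*n))^(m-k) * (1 - X^(2*n+2))^(m-k) * (1 - X)^k * X^(2*k*n))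
      = (U*G) * (P1*Nm*Xa) * Uk * Xb"
    unfolding a c Uk_def U_def[symmetric] b[symmetric] by (simp add: mult.assoc)
  have DENe: "((1 - X^4) * (1 - X^2) powi (2*int m - 2*int k - 1) * (\<Prod>i=0..k. 1 - X^(2*m-2*i+1)))
      = (V*Wp) * (P3/P2) * (U*Uk*C*R)"
    unfolding d1 d2 d3 by (simp add: mult.assoc)
  have "((1 - X^(2*n+1)) * (1 - X^(2*n))^(m-k) * (1 - X^(2*n+2))^(m-k) * (1 - X)^k * X^(2*k*n))
      / ((1 - X^4) * (1 - X^2) powi (2*int m - 2*int k - 1) * (\<Prod>i=0..k. 1 - X^(2*m-2*i+1)))
      = (U*G) * (P1*Nm*Xa) * Uk * Xb / ((V*Wp) * (P3/P2) * (U*Uk*C*R))"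
    by (simp only: NUMe DENe)
  also have "\<dots> = G*Xm/(Wp*C) * Nm / R"
    by (rule alg2[OF U0 V0 W0 C0 R0 P20(1) Uk0 P20(2) P1e Xme])
  also have "\<dots> = rho m n * (nu n)^(m-k) / Rk m k"
    unfolding rho_def G_def C_def Wp_def x_def Xm_def Nm_def R_def by simp
  finally show ?thesis .
qed


definition psi :: "nat \<Rightarrow> nat \<Rightarrow> F" where
  "psi m k = (-1)^k * Q m k X / Rk m k"

definition Psi :: "nat \<Rightarrow> F poly" where
  "Psi m = (\<Sum>k=0..m. monom (psi m k) (m-k))"

lemma poly_Psi: "poly (Psi m) y = (\<Sum>k=0..m. psi m k * y^(m-k))"
  unfolding Psi_def by (simp add: poly_sum poly_monom)

lemma degree_Psi: "degree (Psi m) \<le> m"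
  unfolding Psi_def by (rule degree_sum_le) (auto intro: order.trans[OF degree_monom_le])

lemma coeff_Psi: "k \<le> m \<Longrightarrow> coeff (Psi m) (m-k) = psi m k"
proof -
  assume k: "k \<le> m"
  have "coeff (Psi m) (m-k) = (\<Sum>k'=0..m. (if k' = k then psi m k' else 0))"
    unfolding Psi_def coeff_sum coeff_monom using k by (intro sum.cong refl) auto
  also have "\<dots> = psi m k" using k by simp
  finally show ?thesis .
qed

lemma S_Psi:
  assumes m: "m \<ge> 1"
  shows "S (2*m) n X = rho m n * poly (Psi m) (nu n)"
proof -
  have "S (2*m) n X = (\<Sum>k=0..m. (-1)^k * Q m k X
            * ((1 - X^(2*n+1)) * (1 - X^(2*n))^(m-k) * (1 - X^(2*n+2))^(m-k)
               * (1 - X)^k * X^(2*k*n))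
            / ((1 - X^4) * (1 - X^2) powi (2*int m - 2*int k - 1)
               * (\<Prod>i=0..k. 1 - X^(2*m-2*i+1))))"
    by (rule XX.main_identity[OF m])
  also have "\<dots> = (\<Sum>k=0..m. rho m n * (psi m k * (nu n)^(m-k)))"
  proof (intro sum.cong refl)
    fix k assume "k \<in> {0..m}"
    then have k: "k \<le> m" by simp
    show "(-1)^k * Q m k X
            * ((1 - X^(2*n+1)) * (1 - X^(2*n))^(m-k) * (1 - X^(2*n+2))^(m-k)
               * (1 - X)^k * X^(2*k*n))
            / ((1 - X^4) * (1 - X^2) powi (2*int m - 2*int k - 1)
               * (\<Prod>i=0..k. 1 - X^(2*m-2*i+1)))
          = rho m n * (psi m k * (nu n)^(m-k))"
    proof -
      have "(-1)^k * Q m k X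
            * ((1 - X^(2*n+1)) * (1 - X^(2*n))^(m-k) * (1 - X^(2*n+2))^(m-k)
               * (1 - X)^k * X^(2*k*n))
            / ((1 - X^4) * (1 - X^2) powi (2*int m - 2*int k - 1)
               * (\<Prod>i=0..k. 1 - X^(2*m-2*i+1)))
          = ((-1)^k * Q m k X) * (((1 - X^(2*n+1)) * (1 - X^(2*n))^(m-k) * (1 - X^(2*n+2))^(m-k)
               * (1 - X)^k * X^(2*k*n))
            / ((1 - X^4) * (1 - X^2) powi (2*int m - 2*int k - 1)
               * (\<Prod>i=0..k. 1 - X^(2*m-2*i+1))))"
        by (simp only: times_divide_eq_right)
      also have "\<dots> = ((-1)^k * Q m k X) * (rho m n * (nu n)^(m-k) / Rk m k)"
        by (simp only: frac_k[OF m k])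
      also have "\<dots> = rho m n * (psi m k * (nu n)^(m-k))"
        unfolding psi_def by (simp add: divide_inverse mult_ac)
      finally show ?thesis .
    qed
  qed
  also have "\<dots> = rho m n * poly (Psi m) (nu n)"
    unfolding poly_Psi by (simp add: sum_distrib_left)
  finally show ?thesis .
qed

lemma ureg_rho: "ureg (rho m n)"
  unfolding rho_def divide_inverse
  by (intro ureg_mult ureg_inverse_u ureg_qt ureg_qq ureg_power ureg_q) auto

lemma reg_Psi_val:
  assumes m: "m \<ge> 1"
  shows "reg (poly (Psi m) (nu n))"
proof -
  have "poly (Psi m) (nu n) = S (2*m) n X * inverse (rho m n)"
    using S_Psi[OF m, of n] ureg_nz[OF ureg_rho[of m n]] by (simp add: field_simps)
  then show ?thesis using reg_mult[OF isp_reg[OF isp_S] ureg_inverse[OF ureg_rho]] by simp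
qed

lemma reg_Q:
  assumes m: "m \<ge> 1" and k: "k \<le> m"
  shows "reg (Q m k X)"
proof -
  have "reg (coeff (Psi m) (m-k))"
  proof (rule newton_coeffs[of reg, OF _ _ _ _ degree_Psi])
    show "\<And>a b. reg a \<Longrightarrow> reg b \<Longrightarrow> reg (a + b)" by (rule reg_add)
    show "\<And>a b. reg a \<Longrightarrow> reg b \<Longrightarrow> reg (a * b)" by (rule reg_mult)
    show "\<And>a. reg a \<Longrightarrow> reg (- a)" by (rule reg_uminus)
    show "reg 0" by (rule isp_reg[OF isp_0])
    show "\<forall>j\<le>m. reg (nu j)" using reg_nu by blast
    show "\<forall>i j. j < i \<longrightarrow> i \<le> m \<longrightarrow> nu i \<noteq> nu j \<and> reg (inverse (nu i - nu j))"
      using nu_props by blast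
    show "\<forall>j\<le>m. reg (poly (Psi m) (nu j))" using reg_Psi_val[OF m] by blast
  qed
  then have p: "reg (psi m k)" using coeff_Psi[OF k] by simp
  have "Q m k X = (-1)^k * psi m k * Rk m k"
    unfolding psi_def using ureg_nz[OF ureg_Rk[of m k]] by (simp add: field_simps)
  moreover have "reg ((-1)^k)" by (intro isp_reg isp_power isp_uminus isp_1)
  ultimately show ?thesis using reg_mult p ureg_reg[OF ureg_Rk] by metis
qed

lemma isp_ee: "isp (ee (X^2) N r)"
  unfolding ee_def by (intro isp_sum isp_mult isp_of_nat isp_power isp_X)

lemma isp_Qmul:
  assumes m: "m \<ge> 1" and k: "k \<le> m"
  shows "isp (Q m k X * ((1 - X)^k * (1 - X^2)^(2*k)))"
proof -
  have U0: "(1 - X)^k * (1 - X^2)^(2*k) \<noteq> 0" using X_pow_ne1[of 1] X_pow_ne1[of 2] by auto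
  have "Q m k X * ((1 - X)^k * (1 - X^2)^(2*k))
      = XX.PP m k * (\<Sum>l=0..k. (-1)^(k-l) / (1 - X^(2*m-2*l+1)) * of_int (dd m l) * HH m k l X)"
    unfolding XX.Q_unfold using U0 by simp
  also have "\<dots> = (\<Sum>l=0..k. (-1)^(k-l) * (XX.PP m k / (1 - X^(2*m-2*l+1))) * of_int (dd m l) * HH m k l X)"
    by (simp add: sum_distrib_left field_simps)
  finally have e: "Q m k X * ((1 - X)^k * (1 - X^2)^(2*k)) = \<dots>" .
  show ?thesis unfolding e
  proof (intro isp_sum isp_mult)
    fix l assume l: "l \<in> {0..k}"
    show "isp ((-1)^(k-l))" by (intro isp_power isp_uminus isp_1)
    show "isp (of_int (dd m l))" by (rule isp_of_int)
    have "HH m k l X = ee (X^2) (m-k) (k-l) + (if l < k then X * ee (X^2) (m-k) (k-l-1) else 0)"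
      using HH_ee[of l k m X] l k by simp
    then show "isp (HH m k l X)" by (auto intro!: isp_add isp_mult isp_ee isp_X isp_0)
    have nz: "1 - X^(2*m-2*l+1) \<noteq> 0" using X_pow_ne1[of "2*m-2*l+1"] by auto
    have "XX.PP m k / (1 - X^(2*m-2*l+1)) = (\<Prod>i\<in>{0..k}-{l}. 1 - X^(2*m-2*i+1))"
      unfolding XX.PP_def using l nz by (simp add: prod.remove[of "{0..k}" l])
    moreover have "isp (\<Prod>i\<in>{0..k}-{l}. 1 - X^(2*m-2*i+1))"
      by (intro isp_prod isp_diff isp_1 isp_power isp_X)
    ultimately show "isp (XX.PP m k / (1 - X^(2*m-2*l+1)))" by simp
  qed
qed


lemma div_lin:
  fixes a b c' \<Psi> :: "int poly"
  assumes "a * ([:-\<rho>,1:]^e * c') = \<Psi> * b" and "poly b \<rho> \<noteq> 0"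
  shows "\<exists>\<Psi>'. \<Psi> = [:-\<rho>,1:]^e * \<Psi>' \<and> a * c' = \<Psi>' * b"
  using assms(1)
proof (induction e arbitrary: \<Psi>)
  case 0 then show ?case by simp
next
  case (Suc e)
  have "poly (\<Psi> * b) \<rho> = 0" unfolding Suc.prems[symmetric] by simp
  then have "poly \<Psi> \<rho> = 0" using assms(2) by simp
  then obtain \<Psi>1 where \<Psi>1: "\<Psi> = [:-\<rho>,1:] * \<Psi>1" using poly_eq_0_iff_dvd by (metis dvdE)
  have eqL: "[:-\<rho>,1:] * (a * ([:-\<rho>,1:]^e * c')) = [:-\<rho>,1:] * (\<Psi>1 * b)"
    using Suc.prems unfolding \<Psi>1 by (simp add: algebra_simps)
  have nz: "[:-\<rho>,1:] \<noteq> 0" by simp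
  from eqL have "a * ([:-\<rho>,1:]^e * c') = \<Psi>1 * b" by (rule iffD1[OF mult_left_cancel[OF nz]])
  then obtain \<Psi>' where "\<Psi>1 = [:-\<rho>,1:]^e * \<Psi>'" "a * c' = \<Psi>' * b" using Suc.IH by blast
  then show ?case unfolding \<Psi>1 by (intro exI[of _ \<Psi>']) (simp add: algebra_simps)
qed

lemma final_poly:
  assumes z: "reg z" and e: "z * to_fract ([:-1,1:]^e1 * ([:1,1:]^e2 * w)) = to_fract \<Psi>"
    and w: "w * w = 1"
  shows "isp z"
proof -
  obtain a b where ab: "poly b 1 \<noteq> 0" "poly b (-1) \<noteq> 0" "z = to_fract a / to_fract b"
    using z unfolding reg_def by blast
  have b0: "to_fract b \<noteq> 0" using ab by auto
  have "to_fract a * to_fract ([:-1,1:]^e1 * ([:1,1:]^e2 * w)) = to_fract \<Psi> * to_fract b"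
    using e ab b0 by (simp add: field_simps)
  then have "a * ([:-1,1:]^e1 * ([:1,1:]^e2 * w)) = \<Psi> * b"
    by (metis to_fract_eq_iff to_fract_mult)
  then obtain \<Psi>1 where "a * ([:1,1:]^e2 * w) = \<Psi>1 * b" using div_lin[of a 1 e1 _ \<Psi> b] ab by auto
  then have "a * ([:-(-1),1:]^e2 * w) = \<Psi>1 * b" by simp
  then obtain \<Psi>2 where \<Psi>2: "a * w = \<Psi>2 * b" using div_lin[of a "-1" e2 w \<Psi>1 b] ab by auto
  then have "a = \<Psi>2 * w * b" using w by (metis mult.assoc mult.commute mult_1_right)
  then have "z = to_fract (\<Psi>2 * w)" using ab b0 by simp
  then show ?thesis unfolding isp_def by blast
qed

lemma den_poly:
  "(1 - X)^k * (1 - X^2)^(2*k) = to_fract ([:-1,1:]^(3*k) * ([:1,1:]^(2*k) * [:-1:]^(3*k)))"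
proof -
  have X: "X = to_fract [:0,1:]" unfolding X_def to_fract_def ..
  have p1: "(1::int poly) - [:0,1:] = [:-1:] * [:-1,1:]" by (simp add: one_pCons)
  have p2: "(1::int poly) - [:0,1:]^2 = [:-1:] * [:-1,1:] * [:1,1:]" by (simp add: one_pCons power2_eq_square)
  have e1: "1 - X = to_fract ([:-1:] * [:-1,1:])" unfolding X p1[symmetric] by simp
  have e2: "1 - X^2 = to_fract ([:-1:] * [:-1,1:] * [:1,1:])" unfolding X p2[symmetric]
    by (simp add: to_fract_power)
  have "(1 - X)^k * (1 - X^2)^(2*k) = to_fract (([:-1:] * [:-1,1:])^k * ([:-1:] * [:-1,1:] * [:1,1:])^(2*k))"
    unfolding e1 e2 by (simp add: to_fract_power)
  also have "([:-1:] * [:-1,1:])^k * ([:-1:] * [:-1,1:] * [:1,1:])^(2*k)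
      = [:-1,1:]^(3*k) * ([:1,1:]^(2*k) * ([:-1::int:])^(3*k))"
  proof -
    have "3*k = k + 2*k" by simp
    then show ?thesis by (simp only: power_mult_distrib power_add) (simp add: algebra_simps)
  qed
  finally show ?thesis .
qed

lemma w_sq: "[:-1::int:]^n * [:-1:]^n = 1"
  by (simp add: power_mult_distrib[symmetric] one_pCons[symmetric])

theorem theorem1p2:
  fixes m n :: nat
  assumes "m \<ge> 1" and "n \<ge> 1"
  shows "(\<forall>s\<le>m. \<exists>p :: int poly. Q m s X = Fract p 1)
       \<and> S (2*m) n X =
         (\<Sum>k=0..m. (-1)^k * Q m k X
            * ((1 - X^(2*n+1)) * (1 - X^(2*n))^(m-k) * (1 - X^(2*n+2))^(m-k)
               * (1 - X)^k * X^(2*k*n))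
            / ((1 - X^4) * (1 - X^2) powi (2*int m - 2*int k - 1)
               * (\<Prod>i=0..k. 1 - X^(2*m-2*i+1))))"
proof
  show "\<forall>s\<le>m. \<exists>p :: int poly. Q m s X = Fract p 1"
  proof (intro allI impI)
    fix s assume s: "s \<le> m"
    obtain \<Psi> where "Q m s X * ((1 - X)^s * (1 - X^2)^(2*s)) = to_fract \<Psi>"
      using isp_Qmul[OF assms(1) s] unfolding isp_def by blast
    then have "isp (Q m s X)"
      using final_poly[OF reg_Q[OF assms(1) s], of "3*s" "2*s" "[:-1:]^(3*s)" \<Psi>] w_sq
      unfolding den_poly by simp
    then show "\<exists>p :: int poly. Q m s X = Fract p 1" unfolding isp_def to_fract_def by blast
  qed
  show "S (2*m) n X =
         (\<Sum>k=0..m. (-1)^k * Q m k X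
            * ((1 - X^(2*n+1)) * (1 - X^(2*n))^(m-k) * (1 - X^(2*n+2))^(m-k)
               * (1 - X)^k * X^(2*k*n))
            / ((1 - X^4) * (1 - X^2) powi (2*int m - 2*int k - 1)
               * (\<Prod>i=0..k. 1 - X^(2*m-2*i+1))))"
    by (rule XX.main_identity[OF assms(1)])
qed


end
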